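(* Let $n\ge 3$ and let $A \in \mathcal{G}_s^{n\times n}(\{0,t\})$, and write $\det A = \sum_{j=0}^{n} c_j s^{n-j}t^j$ as a polynomial in the indeterminates $s,t$. If the coefficient $c_2$ of $s^{n-2}t^2$ is zero, then the coefficient $c_3$ of $s^{n-3}t^3$ satisfies $|c_3| \le \lfloor n/2\rfloor\,\lfloor (n-1)/2\rfloor$.
   Context: $\mathcal{G}_s^{n\times n}(\{0,t\})$ denotes the set of all $n\times n$ upper Hessenberg matrices $A=(a_{ij})$ with $a_{i+1,i} = s$ for $1\le i\le n-1$, $a_{ij}=0$ for $i > j+1$, and $a_{ij}\in\{0,t\}$ for all $i \le j$. Here $s,t$ are treated as indeterminates, so $\det A$ is a homogeneous polynomial of degree $n$ in $s,t$ with integer coefficients. *)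

theory Defs
  imports "Jordan_Normal_Form.Determinant" "HOL-Computational_Algebra.Polynomial"
begin

text \<open>Bivariate integer polynomials in s,t are modelled as int poly poly:
  the outer variable is t, the inner (coefficient) variable is s.\<close>

definition var_t :: "int poly poly" where
  "var_t = monom 1 1"

definition var_s :: "int poly poly" where
  "var_s = [: monom 1 1 :]"

text \<open>The set G_s^{n x n}({0,t}) with 0-based indices: subdiagonal entries s,
  entries strictly below the subdiagonal 0, entries on/above diagonal in {0,t}.\<close>

definition hess_set :: "nat \<Rightarrow> int poly poly mat set" where
  "hess_set n = {A. A \<in> carrier_mat n n \<and>
      (\<forall>i<n. \<forall>j<n.
        (i = j + 1 \<longrightarrow> A $$ (i, j) = var_s) \<and>
        (j + 1 < i \<longrightarrow> A $$ (i, j) = 0) \<and>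
        (i \<le> j \<longrightarrow> A $$ (i, j) \<in> {0, var_t}))}"

definition st_coeff :: "nat \<Rightarrow> int poly poly \<Rightarrow> nat \<Rightarrow> int" where
  "st_coeff n p j = coeff (coeff p j) (n - j)"

end

theory Submission
  imports Defs
begin


function hg :: "'a::comm_ring_1 \<Rightarrow> nat \<Rightarrow> (nat \<Rightarrow> nat \<Rightarrow> 'a) \<Rightarrow> 'a" where
  "hg s 0 f = 1"
| "hg s (Suc n) f = (\<Sum>b\<le>n. f 0 b * (-s)^b * hg s (n-b) (\<lambda>i j. f (i+b+1) (j+b+1)))"
  by pat_completeness auto
termination by (relation "measure (\<lambda>(s,n,f). n)") auto

lemma hg_cong:
  "(\<And>i j. i \<le> j \<Longrightarrow> j < n \<Longrightarrow> f i j = g i j) \<Longrightarrow> hg s n f = hg s n g"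
proof (induction n arbitrary: f g rule: less_induct)
  case (less n)
  show ?case
  proof (cases n)
    case 0 then show ?thesis by simp
  next
    case (Suc m)
    show ?thesis unfolding Suc hg.simps
    proof (rule sum.cong[OF refl])
      fix b assume b: "b \<in> {..m}"
      have "hg s (m-b) (\<lambda>i j. f (i+b+1) (j+b+1)) = hg s (m-b) (\<lambda>i j. g (i+b+1) (j+b+1))"
        by (rule less.IH) (use b Suc less.prems in auto)
      moreover have "f 0 b = g 0 b" using b Suc less.prems by auto
      ultimately show "f 0 b * (-s)^b * hg s (m-b) (\<lambda>i j. f (i+b+1) (j+b+1)) =
        g 0 b * (-s)^b * hg s (m-b) (\<lambda>i j. g (i+b+1) (j+b+1))" by simp
    qed
  qed
qed

lemma hg_step:
  "hg s (Suc (Suc m)) f = f 0 0 * hg s (Suc m) (\<lambda>i j. f (i+1) (j+1))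
     - s * hg s (Suc m) (\<lambda>i j. if i = 0 then f 0 (j+1) else f (i+1) (j+1))"
proof -
  have "hg s (Suc (Suc m)) f = (\<Sum>b\<le>Suc m. f 0 b * (-s)^b * hg s (Suc m-b) (\<lambda>i j. f (i+b+1) (j+b+1)))"
    by simp
  also have "\<dots> = f 0 0 * hg s (Suc m) (\<lambda>i j. f (i+1) (j+1)) +
     (\<Sum>b\<le>m. f 0 (Suc b) * (-s)^(Suc b) * hg s (m-b) (\<lambda>i j. f (i+b+2) (j+b+2)))"
    by (subst sum.atMost_Suc_shift) (simp add: add.commute add.left_commute)
  also have "(\<Sum>b\<le>m. f 0 (Suc b) * (-s)^(Suc b) * hg s (m-b) (\<lambda>i j. f (i+b+2) (j+b+2)))
     = - s * hg s (Suc m) (\<lambda>i j. if i = 0 then f 0 (j+1) else f (i+1) (j+1))"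
    by (simp add: sum_distrib_left mult_ac)
  finally show ?thesis by simp
qed


definition is_hess :: "'a::comm_ring_1 \<Rightarrow> nat \<Rightarrow> 'a mat \<Rightarrow> bool" where
  "is_hess s n A \<longleftrightarrow> A \<in> carrier_mat n n \<and> (\<forall>i<n. \<forall>j<n.
        (i = j + 1 \<longrightarrow> A $$ (i, j) = s) \<and> (j + 1 < i \<longrightarrow> A $$ (i, j) = 0))"

lemma det_hess: "is_hess s n A \<Longrightarrow> det A = hg s n (\<lambda>i j. A $$ (i,j))"
proof (induction n arbitrary: A rule: less_induct)
  case (less n)
  have A: "A \<in> carrier_mat n n" using less.prems by (simp add: is_hess_def)
  have hs: "\<And>j. Suc j < n \<Longrightarrow> A $$ (Suc j, j) = s" using less.prems by (auto simp: is_hess_def)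
  have hz: "\<And>i j. i < n \<Longrightarrow> Suc j < i \<Longrightarrow> A $$ (i, j) = 0" using less.prems by (auto simp: is_hess_def)
  show ?case
  proof (cases n)
    case 0 then show ?thesis using A by simp
  next
    case (Suc m)
    have lap: "det A = (\<Sum>i<n. A $$ (i,0) * cofactor A i 0)"
      by (rule laplace_expansion_column[OF A]) (simp add: Suc)
    show ?thesis
    proof (cases m)
      case 0
      have "det A = A $$ (0,0) * cofactor A 0 0" using lap Suc 0 by simp
      also have "cofactor A 0 0 = 1" unfolding cofactor_def
        using mat_delete_carrier[OF A, of 0 0] Suc 0 by simp
      finally show ?thesis using Suc 0 by simp
    next
      case (Suc k)
      note nSS = \<open>n = Suc m\<close>[unfolded Suc]
      have "det A = (\<Sum>i\<in>{0,1}. A $$ (i,0) * cofactor A i 0)"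
        unfolding lap
      proof (rule sum.mono_neutral_right)
        show "\<forall>i\<in>{..<n} - {0, 1}. A $$ (i, 0) * cofactor A i 0 = 0"
          using less.prems unfolding is_hess_def by auto
      qed (use nSS in auto)
      also have "\<dots> = A $$ (0,0) * det (mat_delete A 0 0) - s * det (mat_delete A 1 0)"
        using less.prems nSS unfolding is_hess_def cofactor_def by auto
      also have "det (mat_delete A 0 0) = hg s m (\<lambda>i j. (mat_delete A 0 0) $$ (i,j))"
        by (rule less.IH) (use A hs hz nSS Suc in \<open>auto simp: is_hess_def mat_delete_def\<close>)
      also have "\<dots> = hg s m (\<lambda>i j. A $$ (i+1,j+1))"
        by (rule hg_cong) (use A nSS Suc in \<open>auto simp: mat_delete_def\<close>)
      also have "det (mat_delete A 1 0) = hg s m (\<lambda>i j. (mat_delete A 1 0) $$ (i,j))"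
        by (rule less.IH) (use A hs hz nSS Suc in \<open>auto simp: is_hess_def mat_delete_def\<close>)
      also have "\<dots> = hg s m (\<lambda>i j. if i = 0 then A $$ (0,j+1) else A $$ (i+1,j+1))"
        by (rule hg_cong) (use A nSS Suc in \<open>auto simp: mat_delete_def\<close>)
      finally show ?thesis using nSS Suc by (simp only: hg_step)
    qed
  qed
qed


fun cnt :: "nat \<Rightarrow> nat \<Rightarrow> (nat \<Rightarrow> nat \<Rightarrow> bool) \<Rightarrow> nat" where
  "cnt 0 n B = (if n = 0 then 1 else 0)"
| "cnt (Suc k) 0 B = 0"
| "cnt (Suc k) (Suc n) B = (\<Sum>b\<le>n. if B 0 b then cnt k (n-b) (\<lambda>i j. B (i+b+1) (j+b+1)) else 0)"

lemma cnt_zero: "n < k \<Longrightarrow> cnt k n B = 0"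
  by (induction k n B rule: cnt.induct) auto

lemma hg_cnt:
  assumes "\<And>i j. i \<le> j \<Longrightarrow> j < n \<Longrightarrow> f i j = (if B i j then t else 0)"
  shows "hg s n f = (\<Sum>k\<le>n. of_nat (cnt k n B) * t^k * (-s)^(n-k))"
  using assms
proof (induction n arbitrary: f B rule: less_induct)
  case (less n)
  show ?case
  proof (cases n)
    case 0 then show ?thesis by simp
  next
    case (Suc m)
    have "hg s n f = (\<Sum>b\<le>m. f 0 b * (-s)^b * hg s (m-b) (\<lambda>i j. f (i+b+1) (j+b+1)))"
      using Suc by simp
    also have "\<dots> = (\<Sum>b\<le>m. \<Sum>k\<le>m. of_nat (if B 0 b then cnt k (m-b) (\<lambda>i j. B (i+b+1) (j+b+1)) else 0) * t^(Suc k) * (-s)^(m-k))"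
    proof (rule sum.cong[OF refl])
      fix b assume b: "b \<in> {..m}"
      let ?B = "\<lambda>i j. B (i+b+1) (j+b+1)"
      have IH: "hg s (m-b) (\<lambda>i j. f (i+b+1) (j+b+1)) = (\<Sum>k\<le>m-b. of_nat (cnt k (m-b) ?B) * t^k * (-s)^(m-b-k))"
        by (rule less.IH) (use b Suc less.prems in auto)
      show "f 0 b * (-s)^b * hg s (m-b) (\<lambda>i j. f (i+b+1) (j+b+1)) =
         (\<Sum>k\<le>m. of_nat (if B 0 b then cnt k (m-b) ?B else 0) * t^(Suc k) * (-s)^(m-k))"
      proof (cases "B 0 b")
        case False
        then show ?thesis using less.prems[of 0 b] b Suc by simp
      next
        case True
        have f0: "f 0 b = t" using less.prems[of 0 b] b Suc True by simp
        have "(\<Sum>k\<le>m. of_nat (if B 0 b then cnt k (m-b) ?B else 0) * t^(Suc k) * (-s)^(m-k))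
           = (\<Sum>k\<le>m-b. of_nat (cnt k (m-b) ?B) * t^(Suc k) * (-s)^(m-k))"
          unfolding if_P[OF True] using b by (intro sum.mono_neutral_right) (auto simp: cnt_zero)
        also have "\<dots> = (\<Sum>k\<le>m-b. t * (-s)^b * (of_nat (cnt k (m-b) ?B) * t^k * (-s)^(m-b-k)))"
        proof (rule sum.cong[OF refl])
          fix k assume "k \<in> {..m-b}"
          then have "m - k = b + (m-b-k)" using b by auto
          then show "of_nat (cnt k (m-b) ?B) * t^(Suc k) * (-s)^(m-k) = t * (-s)^b * (of_nat (cnt k (m-b) ?B) * t^k * (-s)^(m-b-k))"
            by (simp add: power_add mult_ac)
        qed
        finally show ?thesis unfolding f0 IH by (simp add: sum_distrib_left)
      qed
    qed
    also have "\<dots> = (\<Sum>k\<le>m. \<Sum>b\<le>m. of_nat (if B 0 b then cnt k (m-b) (\<lambda>i j. B (i+b+1) (j+b+1)) else 0) * t^(Suc k) * (-s)^(m-k))"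
      by (rule sum.swap)
    also have "\<dots> = (\<Sum>k\<le>m. of_nat (cnt (Suc k) (Suc m) B) * t^(Suc k) * (-s)^(m-k))"
      by (simp add: sum_distrib_right of_nat_sum)
    also have "\<dots> = (\<Sum>k\<le>n. of_nat (cnt k n B) * t^k * (-s)^(n-k))"
      unfolding Suc by (subst sum.atMost_Suc_shift) simp
    finally show ?thesis .
  qed
qed


lemma var_t_pow: "var_t ^ k = monom 1 k"
  unfolding var_t_def by (simp add: monom_power)

lemma var_s_pow: "(- var_s) ^ m = [: monom ((-1)^m) m :]"
  unfolding var_s_def
proof (induction m)
  case 0 then show ?case by (simp add: one_pCons one_poly_eq_simps)
next
  case (Suc m)
  have "(- [:monom (1::int) 1:]) ^ Suc m = (- [:monom 1 1:]) * [: monom ((-1)^m) m :]"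
    using Suc.IH by (simp only: power_Suc)
  also have "\<dots> = [: - monom 1 1 :] * [: monom ((-1)^m) m :]" by simp
  also have "\<dots> = [: - monom 1 1 * monom ((-1)^m) m :]" by simp
  also have "- monom 1 1 * monom ((-1::int)^m) m = monom ((-1)^Suc m) (Suc m)"
    by (simp add: mult_monom minus_monom)
  finally show ?case .
qed

lemma term_monom: "of_nat c * var_t^k * (-var_s)^m = monom (monom ((-1)^m * int c) m) k"
proof -
  have "of_nat c * var_t^k * (-var_s)^m = smult (of_nat c) (monom 1 k * [: monom ((-1)^m) m :])"
    unfolding var_t_pow var_s_pow by (simp add: of_nat_poly)
  also have "monom 1 k * [: monom ((-1::int)^m) m :] = monom (monom ((-1)^m) m) k"
    by (simp add: monom_altdef)
  also have "smult (of_nat c) (monom (monom ((-1::int)^m) m) k) = monom (monom ((-1)^m * int c) m) k"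
    by (simp add: smult_monom of_nat_poly)
  finally show ?thesis .
qed

lemma st_coeff_sum:
  assumes "j \<le> n"
  shows "st_coeff n (\<Sum>k\<le>n. of_nat (c k) * var_t^k * (-var_s)^(n-k)) j = (-1)^(n-j) * int (c j)"
  using assms unfolding term_monom st_coeff_def by (simp add: coeff_sum coeff_monom)


lemma cnt0[simp]: "cnt 0 n B = (if n = 0 then 1 else 0)" by (rule cnt.simps(1))

lemma cnt1: "cnt (Suc 0) (Suc m) B = (if B 0 m then 1 else 0)"
proof -
  have "cnt (Suc 0) (Suc m) B = (\<Sum>b\<le>m. if B 0 b then (if m - b = 0 then 1 else 0) else 0)"
    by (simp only: cnt.simps)
  also have "\<dots> = (\<Sum>b\<le>m. if b = m then (if B 0 m then 1 else 0) else 0)"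
    by (rule sum.cong) auto
  finally show ?thesis by simp
qed

lemma cnt2: "cnt 2 (Suc m) B = (\<Sum>b<m. if B 0 b \<and> B (b+1) m then 1 else 0)"
proof -
  have "cnt 2 (Suc m) B = (\<Sum>b\<le>m. if B 0 b then cnt (Suc 0) (m-b) (\<lambda>i j. B (i+b+1) (j+b+1)) else 0)"
    by (simp add: numeral_2_eq_2)
  also have "\<dots> = (\<Sum>b<Suc m. if b < m \<and> B 0 b \<and> B (b+1) m then 1 else 0)"
  proof (rule sum.cong)
    fix b assume "b \<in> {..<Suc m}"
    then show "(if B 0 b then cnt (Suc 0) (m-b) (\<lambda>i j. B (i+b+1) (j+b+1)) else 0) = (if b < m \<and> B 0 b \<and> B (b+1) m then 1 else 0)"
    proof (cases "b < m")
      case True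
      then obtain r where r: "m - b = Suc r" "r + b + 1 = m" by (metis Suc_diff_Suc Suc_eq_plus1 add.commute add_Suc_right le_add_diff_inverse less_imp_le_nat plus_1_eq_Suc)
      have "cnt (Suc 0) (m-b) (\<lambda>i j. B (i+b+1) (j+b+1)) = cnt (Suc 0) (Suc r) (\<lambda>i j. B (i+b+1) (j+b+1))"
        by (simp only: r)
      also have "\<dots> = (if B (b+1) m then 1 else 0)" unfolding cnt1 using r by simp
      finally show ?thesis using True by simp
    next
      case False then show ?thesis using \<open>b \<in> {..<Suc m}\<close> by (auto simp: cnt_zero)
    qed
  qed (auto simp: lessThan_Suc_atMost)
  also have "\<dots> = (\<Sum>b<m. if B 0 b \<and> B (b+1) m then 1 else 0)"
    by simp
  finally show ?thesis .
qed


lemma prod_bound: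
  fixes a b m :: nat
  assumes "a + b \<le> m"
  shows "a * b \<le> (m div 2) * ((m + 1) div 2)"
proof -
  have "0 \<le> (int a - int b)^2" by simp
  then have h1: "4 * (int a * int b) \<le> (int a + int b)^2"
    by (simp add: power2_eq_square algebra_simps)
  have "(int a + int b)^2 \<le> (int m)^2"
    using assms by (intro power_mono) auto
  with h1 have h: "4 * int (a * b) \<le> int m * int m" by (simp add: power2_eq_square)
  define x where "x = int (a * b)"
  have x0: "x \<ge> 0" unfolding x_def by simp
  consider r where "m = 2 * r" | r where "m = 2 * r + 1" by (metis oddE evenE)
  then show ?thesis
  proof cases
    case 1
    then have "4 * x \<le> 4 * (int r * int r)" using h unfolding x_def by (simp add: algebra_simps)
    then have "x \<le> int r * int r" by simp
    then show ?thesis using 1 unfolding x_def by simp (metis of_nat_le_iff of_nat_mult)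
  next
    case 2
    then have "4 * x \<le> 4 * (int r * int r + int r) + 1" using h unfolding x_def by (simp add: algebra_simps)
    moreover have "\<And>x y :: int. 4 * x \<le> 4 * y + 1 \<Longrightarrow> x \<le> y" by presburger
    ultimately have "x \<le> int r * int r + int r" by blast
    moreover have "(m div 2) * ((m + 1) div 2) = r * r + r" using 2 by simp
    ultimately show ?thesis unfolding x_def by (metis of_nat_add of_nat_le_iff of_nat_mult)
  qed
qed


lemma cnt3_le:
  "cnt 3 (Suc m) B \<le> card {b. b < m \<and> B 0 b} * card {q. q < m \<and> B (q+1) m}"
proof -
  define Y where "Y = {q. q < m \<and> B (q+1) m}"
  have "cnt 3 (Suc m) B = (\<Sum>b\<le>m. if B 0 b then cnt (Suc (Suc 0)) (m-b) (\<lambda>i j. B (i+b+1) (j+b+1)) else 0)"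
    by (simp only: cnt.simps numeral_3_eq_3)
  also have "\<dots> \<le> (\<Sum>b\<le>m. if b < m \<and> B 0 b then card Y else 0)"
  proof (rule sum_mono)
    fix b assume b: "b \<in> {..m}"
    show "(if B 0 b then cnt (Suc (Suc 0)) (m-b) (\<lambda>i j. B (i+b+1) (j+b+1)) else 0) \<le> (if b < m \<and> B 0 b then card Y else 0)"
    proof (cases "b < m")
      case False
      then have "m - b = 0" using b by simp
      then show ?thesis by (simp only: cnt.simps) simp
    next
      case True
      then obtain r where r: "m - b = Suc r" "r + b + 1 = m"
        by (metis Suc_diff_Suc Suc_eq_plus1 add.commute add_Suc_right le_add_diff_inverse less_imp_le_nat plus_1_eq_Suc)
      have "cnt (Suc (Suc 0)) (m-b) (\<lambda>i j. B (i+b+1) (j+b+1)) = cnt 2 (Suc r) (\<lambda>i j. B (i+b+1) (j+b+1))"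
        by (simp only: r numeral_2_eq_2)
      also have "\<dots> = (\<Sum>c<r. if B (b+1) (c+b+1) \<and> B (c+1+b+1) (r+b+1) then 1 else 0)"
        unfolding cnt2 by simp
      also have "\<dots> \<le> (\<Sum>c<r. if c + b + 1 \<in> Y then 1 else 0)"
        by (rule sum_mono) (use r in \<open>auto simp: Y_def add_ac\<close>)
      also have "\<dots> = card {c \<in> {..<r}. c + b + 1 \<in> Y}"
        by (simp add: sum.inter_filter[symmetric])
      also have "\<dots> \<le> card Y"
      proof (rule card_inj_on_le)
        show "inj_on (\<lambda>c. c + b + 1) {c \<in> {..<r}. c + b + 1 \<in> Y}" by (auto simp: inj_on_def)
      qed (auto simp: Y_def)
      finally show ?thesis using True by simp
    qed
  qed
  also have "\<dots> = card {b. b < m \<and> B 0 b} * card Y"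
  proof -
    have "(\<Sum>b\<le>m. if b < m \<and> B 0 b then card Y else 0) = (\<Sum>b\<in>{b \<in> {..m}. b < m \<and> B 0 b}. card Y)"
      by (rule sum.inter_filter[OF finite_atMost, symmetric])
    also have "{b \<in> {..m}. b < m \<and> B 0 b} = {b. b < m \<and> B 0 b}" by auto
    finally show ?thesis by simp
  qed
  finally show ?thesis unfolding Y_def .
qed

lemma cnt3_bound:
  assumes "cnt 2 (Suc m) B = 0"
  shows "cnt 3 (Suc m) B \<le> (m div 2) * ((m + 1) div 2)"
proof -
  define X where "X = {b. b < m \<and> B 0 b}"
  define Y where "Y = {q. q < m \<and> B (q+1) m}"
  have "\<forall>b\<in>{..<m}. (if B 0 b \<and> B (b+1) m then 1 else 0) = (0::nat)"
    using assms unfolding cnt2 by (subst sum_eq_0_iff[symmetric]) auto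
  then have "X \<inter> Y = {}" unfolding X_def Y_def by (auto split: if_splits)
  moreover have "X \<union> Y \<subseteq> {..<m}" unfolding X_def Y_def by auto
  ultimately have "card X + card Y \<le> m"
    by (metis card_Un_disjoint card_lessThan card_mono finite_lessThan finite_subset finite_Un)
  then have "card X * card Y \<le> (m div 2) * ((m + 1) div 2)" by (rule prod_bound)
  then show ?thesis using cnt3_le[of m B] unfolding X_def Y_def by linarith
qed


theorem lemma5p6:
  fixes n :: nat and A :: "int poly poly mat"
  assumes "n \<ge> 3"
    and "A \<in> hess_set n"
    and "st_coeff n (det A) 2 = 0"
  shows "\<bar>st_coeff n (det A) 3\<bar> \<le> int ((n div 2) * ((n - 1) div 2))"
proof -
  define B where "B = (\<lambda>i j. A $$ (i,j) = var_t)"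
  have hs: "is_hess var_s n A" using assms(2) unfolding hess_set_def is_hess_def by auto
  have ent: "\<And>i j. i \<le> j \<Longrightarrow> j < n \<Longrightarrow> A $$ (i,j) = (if B i j then var_t else 0)"
  proof -
    fix i j assume ij: "i \<le> j" "j < n"
    then have "A $$ (i,j) \<in> {0, var_t}" using assms(2) unfolding hess_set_def by auto
    then show "A $$ (i,j) = (if B i j then var_t else 0)" unfolding B_def by auto
  qed
  have det: "det A = (\<Sum>k\<le>n. of_nat (cnt k n B) * var_t^k * (-var_s)^(n-k))"
    unfolding det_hess[OF hs] by (rule hg_cnt) (rule ent)
  have co: "\<And>j. j \<le> n \<Longrightarrow> st_coeff n (det A) j = (-1)^(n-j) * int (cnt j n B)"
    unfolding det by (rule st_coeff_sum)
  obtain m where m: "n = Suc m" using assms(1) by (cases n) auto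
  have "cnt 2 (Suc m) B = 0" using co[of 2] assms(1,3) m by simp
  then have "cnt 3 (Suc m) B \<le> (m div 2) * ((m + 1) div 2)" by (rule cnt3_bound)
  moreover have "\<bar>st_coeff n (det A) 3\<bar> = int (cnt 3 n B)"
    using co[of 3] assms(1) by (simp add: abs_mult)
  ultimately show ?thesis using m
    by (metis Suc_eq_plus1 diff_Suc_1 mult.commute of_nat_le_iff)
qed

end
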